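(* Let $E$ be a Banach space containing no isomorphic copy of $c_0$, and let $(T(t))_{t\in\mathbb{R}}$ be a bounded $C_0$-group on $E$. If $x\in E$ and $a>0$ are such that $(T(a)-\mathrm{Id})x$ is asymptotically almost periodic, then $x$ is asymptotically almost periodic.
   Context: A vector $y\in E$ is asymptotically almost periodic if its orbit $\{T(t)y:t\ge0\}$ is relatively compact in $E$. A bounded $C_0$-group is a strongly continuous group homomorphism $T:\mathbb{R}\to\mathcal{L}(E)$ with $\sup_{t\in\mathbb{R}}\|T(t)\|<\infty$. *)

theory Defs
  imports "HOL-Analysis.Analysis"
begin

text \<open>The Banach space c_0 of real null sequences with the sup norm is represented by
  the set of sequences f with f tending to 0.  A space E contains an isomorphic copy of c_0
  iff there is a linear map J from c_0 to E which is bounded and bounded below.\<close>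

definition c0_embeds :: "'a::real_normed_vector itself \<Rightarrow> bool" where
  "c0_embeds _ \<longleftrightarrow>
     (\<exists>J :: (nat \<Rightarrow> real) \<Rightarrow> 'a.
        (\<forall>f g. f \<longlonglongrightarrow> 0 \<longrightarrow> g \<longlonglongrightarrow> 0 \<longrightarrow> J (\<lambda>n. f n + g n) = J f + J g) \<and>
        (\<forall>c f. f \<longlonglongrightarrow> 0 \<longrightarrow> J (\<lambda>n. c * f n) = c *\<^sub>R J f) \<and>
        (\<exists>m M. 0 < m \<and> (\<forall>f. f \<longlonglongrightarrow> 0 \<longrightarrow>
            m * (SUP n. \<bar>f n\<bar>) \<le> norm (J f) \<and> norm (J f) \<le> M * (SUP n. \<bar>f n\<bar>))))"

definition bounded_C0_group :: "(real \<Rightarrow> ('a::banach \<Rightarrow>\<^sub>L 'a)) \<Rightarrow> bool" where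
  "bounded_C0_group T \<longleftrightarrow>
     T 0 = id_blinfun \<and>
     (\<forall>s t. T (s + t) = T s o\<^sub>L T t) \<and>
     (\<forall>x. continuous_on UNIV (\<lambda>t. blinfun_apply (T t) x)) \<and>
     (\<exists>M. \<forall>t. norm (T t) \<le> M)"

definition asymptotically_almost_periodic ::
  "(real \<Rightarrow> ('a::real_normed_vector \<Rightarrow>\<^sub>L 'a)) \<Rightarrow> 'a \<Rightarrow> bool" where
  "asymptotically_almost_periodic T y \<longleftrightarrow>
     compact (closure {blinfun_apply (T t) y | t. t \<ge> 0})"

end

theory Submission
  imports Defs
begin

locale grp =
  fixes T :: "real \<Rightarrow> ('a::banach \<Rightarrow>\<^sub>L 'a)" and a :: real and M :: real
  assumes T0: "T 0 = id_blinfun" and Tadd: "\<And>s t. T (s+t) = T s o\<^sub>L T t"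
    and bnd: "\<And>t. norm (T t) \<le> M" and M1: "1 \<le> M" and apos: "0 < a"
begin

definition W :: "nat \<Rightarrow> 'a \<Rightarrow> 'a" where "W n z = blinfun_apply (T (real n * a)) z"

lemma Tapp_add: "blinfun_apply (T (s+t)) z = blinfun_apply (T s) (blinfun_apply (T t) z)"
  by (simp add: Tadd)

lemma W_add: "W (m+n) z = W m (W n z)"
  unfolding W_def by (simp add: distrib_right Tapp_add[symmetric])

lemma W_0[simp]: "W 0 z = z" unfolding W_def by (simp add: T0)

lemma T_norm: "norm (blinfun_apply (T t) z) \<le> M * norm z"
  by (meson bnd mult_right_mono norm_blinfun norm_ge_zero order_trans)

lemma W_norm: "norm (W n z) \<le> M * norm z" unfolding W_def by (rule T_norm)

lemma W_diff: "W n (u - v) = W n u - W n v" unfolding W_def by (simp add: blinfun.diff_right)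
lemma W_plus: "W n (u + v) = W n u + W n v" unfolding W_def by (simp add: blinfun.add_right)
lemma W_scale: "W n (c *\<^sub>R u) = c *\<^sub>R W n u" unfolding W_def by (simp add: blinfun.scaleR_right)
lemma W_sum: "W n (\<Sum>i\<in>A. f i) = (\<Sum>i\<in>A. W n (f i))" unfolding W_def by (simp add: blinfun.sum_right)

lemma Tinv_W: "j \<le> n \<Longrightarrow> blinfun_apply (T (-(real j * a))) (W n z) = W (n - j) z"
proof -
  assume "j \<le> n"
  have "real n * a = real (n-j) * a + real j * a" using \<open>j \<le> n\<close> by (simp add: of_nat_diff algebra_simps)
  then show ?thesis unfolding W_def by (simp add: Tapp_add[symmetric])
qed

lemma Tinv_W': "blinfun_apply (T (-(real j * a))) (W j z) = z"
  using Tinv_W[of j j z] by simp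

end

context grp begin

definition P :: "'a set \<Rightarrow> real \<Rightarrow> nat set" where "P H \<delta> = {p. \<forall>z\<in>H. norm (W p z - z) \<le> \<delta>}"

lemma net_image:
  fixes g :: "nat \<Rightarrow> 'b::metric_space"
  assumes "compact K" "\<forall>n\<in>N. g n \<in> K" "e > 0"
  shows "\<exists>F. finite F \<and> F \<subseteq> N \<and> (\<forall>n\<in>N. \<exists>n'\<in>F. dist (g n) (g n') < e)"
proof -
  have "e/2 > 0" using assms(3) by simp
  then obtain k where k: "finite k" "K \<subseteq> (\<Union>x\<in>k. ball x (e/2))"
    using assms(1) unfolding compact_eq_totally_bounded by blast
  define ch where "ch c = (SOME n. n \<in> N \<and> dist (g n) c < e/2)" for c
  define F where "F = ch ` {c\<in>k. \<exists>n\<in>N. dist (g n) c < e/2}"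
  have chp: "ch c \<in> N \<and> dist (g (ch c)) c < e/2" if "\<exists>n\<in>N. dist (g n) c < e/2" for c
    unfolding ch_def using someI_ex[of "\<lambda>n. n \<in> N \<and> dist (g n) c < e/2"] that by blast
  have "finite F" unfolding F_def using k(1) by simp
  moreover have "F \<subseteq> N" unfolding F_def using chp by blast
  moreover have "\<forall>n\<in>N. \<exists>n'\<in>F. dist (g n) (g n') < e"
  proof
    fix n assume n: "n \<in> N"
    then have "g n \<in> (\<Union>x\<in>k. ball x (e/2))" using k(2) assms(2) by blast
    then obtain c where c: "c \<in> k" "dist c (g n) < e/2" by auto
    then have ex: "\<exists>n\<in>N. dist (g n) c < e/2" using n by (auto simp: dist_commute)
    have "ch c \<in> F" unfolding F_def using c ex by auto
    moreover have "dist (g n) c < e/2" using c(2) by (simp add: dist_commute)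
    ultimately show "\<exists>n'\<in>F. dist (g n) (g n') < e"
      using chp[OF ex] dist_triangle_half_l[of "g n" c e "g (ch c)"] by blast
  qed
  ultimately show ?thesis by blast
qed
lemma fin_net:
  assumes "finite H" "\<forall>z\<in>H. \<exists>K. compact K \<and> (\<forall>n. W n z \<in> K)"
  shows "\<delta> > 0 \<Longrightarrow> \<exists>J. finite J \<and> (\<forall>n. \<exists>j\<in>J. \<forall>z\<in>H. dist (W n z) (W j z) < \<delta>)"
  using assms
proof (induction H arbitrary: \<delta> rule: finite_induct)
  case empty
  show ?case by (rule exI[of _ "{0}"]) simp
next
  case (insert z H)
  have h1: "\<forall>z\<in>H. \<exists>K. compact K \<and> (\<forall>n. W n z \<in> K)" using insert.prems(2) by simp
  have h2: "\<delta>/2 > 0" using insert.prems(1) by simp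
  obtain J where J: "finite J" "\<forall>n. \<exists>j\<in>J. \<forall>z\<in>H. dist (W n z) (W j z) < \<delta>/2"
    using insert.IH[OF h2 h1] by blast
  have "\<exists>K. compact K \<and> (\<forall>n. W n z \<in> K)" using insert.prems(2) by simp
  then obtain K where K: "compact K" "\<forall>n. W n z \<in> K" by blast
  define N where "N j = {n. \<forall>z\<in>H. dist (W n z) (W j z) < \<delta>/2}" for j
  have "\<forall>j\<in>J. \<exists>F. finite F \<and> F \<subseteq> N j \<and> (\<forall>n\<in>N j. \<exists>n'\<in>F. dist (W n z) (W n' z) < \<delta>)"
  proof
    fix j show "\<exists>F. finite F \<and> F \<subseteq> N j \<and> (\<forall>n\<in>N j. \<exists>n'\<in>F. dist (W n z) (W n' z) < \<delta>)"
      by (rule net_image[OF K(1)]) (use K(2) insert.prems(1) in simp_all)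
  qed
  from bchoice[OF this] obtain F where F: "\<forall>j\<in>J. finite (F j) \<and> F j \<subseteq> N j \<and> (\<forall>n\<in>N j. \<exists>n'\<in>F j. dist (W n z) (W n' z) < \<delta>)"
    by blast
  show ?case
  proof (rule exI[of _ "\<Union>j\<in>J. F j"], intro conjI allI)
    show "finite (\<Union>j\<in>J. F j)" using J(1) F by simp
    fix n
    obtain j where j: "j \<in> J" "n \<in> N j" using J(2) unfolding N_def by blast
    then have Fj: "finite (F j) \<and> F j \<subseteq> N j \<and> (\<forall>n\<in>N j. \<exists>n'\<in>F j. dist (W n z) (W n' z) < \<delta>)"
      using F by blast
    then obtain n' where n': "n' \<in> F j" "dist (W n z) (W n' z) < \<delta>" using j(2) by blast
    have "n' \<in> N j" using Fj n' by blast
    have "dist (W n w) (W n' w) < \<delta>" if "w \<in> H" for w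
    proof -
      have "dist (W n w) (W j w) < \<delta>/2" "dist (W n' w) (W j w) < \<delta>/2"
        using j(2) \<open>n' \<in> N j\<close> that unfolding N_def by auto
      then show ?thesis using dist_triangle_half_l[of "W n w" "W j w" \<delta> "W n' w"] by (simp add: dist_commute)
    qed
    then have "\<forall>w\<in>insert z H. dist (W n w) (W n' w) < \<delta>" using n'(2) by simp
    moreover have "n' \<in> (\<Union>j\<in>J. F j)" using n'(1) j(1) by blast
    ultimately show "\<exists>j\<in>\<Union>j\<in>J. F j. \<forall>w\<in>insert z H. dist (W n w) (W j w) < \<delta>" by blast
  qed
qed

lemma rel_dense:
  assumes "finite H" "\<forall>z\<in>H. \<exists>K. compact K \<and> (\<forall>n. W n z \<in> K)" "\<delta> > 0"
  shows "\<exists>L. \<forall>n. \<exists>p. p \<le> n \<and> n \<le> p + L \<and> p \<in> P H \<delta>"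
proof -
  obtain J where J: "finite J" "\<forall>n. \<exists>j\<in>J. \<forall>z\<in>H. dist (W n z) (W j z) < \<delta>/M"
  proof -
    have "\<delta>/M > 0" using assms(3) M1 by simp
    then show ?thesis using fin_net[OF assms(1,2)] that by blast
  qed
  show ?thesis
  proof (rule exI[of _ "Max (insert 0 J)"], rule allI)
    fix n
    obtain j where j: "j \<in> J" "\<forall>z\<in>H. dist (W n z) (W j z) < \<delta>/M" using J by blast
    have jle: "j \<le> Max (insert 0 J)" using J(1) j(1) by simp
    show "\<exists>p\<le>n. n \<le> p + Max (insert 0 J) \<and> p \<in> P H \<delta>"
    proof (cases "j \<le> n")
      case True
      have "n - j \<in> P H \<delta>" unfolding P_def
      proof (intro CollectI ballI)
        fix z assume z: "z \<in> H"
        have "W (n-j) z - z = blinfun_apply (T (-(real j * a))) (W n z - W j z)"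
          using Tinv_W[OF True] Tinv_W' by (simp add: blinfun.diff_right)
        also have "norm \<dots> \<le> M * norm (W n z - W j z)" by (rule T_norm)
        also have "\<dots> \<le> M * (\<delta>/M)" using j(2) z M1 by (intro mult_left_mono) (auto simp: dist_norm)
        also have "\<dots> = \<delta>" using M1 by simp
        finally show "norm (W (n - j) z - z) \<le> \<delta>" .
      qed
      then show ?thesis using True jle by (intro exI[of _ "n-j"]) auto
    next
      case False
      have "0 \<in> P H \<delta>" unfolding P_def using assms(3) by simp
      then show ?thesis using False jle by (intro exI[of _ 0]) auto
    qed
  qed
qed

end


locale orb = grp T a M for T :: "real \<Rightarrow> ('a::banach \<Rightarrow>\<^sub>L 'a)" and a M +
  fixes x :: 'a and Cy :: "'a set"
  assumes Cy: "compact Cy" and yorb: "\<And>j. W j (W 1 x - x) \<in> Cy"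
begin

definition S :: "nat \<Rightarrow> 'a" where "S n = W n x - x"

lemma S_add: "S (m + n) = S m + W m (S n)"
  unfolding S_def by (simp add: W_add W_diff)

lemma S_swap: "W d (S m) - S m = W m (S d) - S d"
  unfolding S_def by (simp add: W_add[symmetric] W_diff add.commute)

lemma S_0[simp]: "S 0 = 0" unfolding S_def by simp

lemma S_bound: "norm (S n) \<le> (M+1) * norm x"
proof -
  have "norm (S n) \<le> norm (W n x) + norm x" unfolding S_def by (rule norm_triangle_ineq4)
  also have "\<dots> \<le> M * norm x + norm x" using W_norm by simp
  finally show ?thesis by (simp add: algebra_simps)
qed

lemma W_zero[simp]: "W n 0 = 0" unfolding W_def by simp

lemma S_orbit: "\<exists>K. compact K \<and> (\<forall>j. W j (S r) \<in> K)"
proof (induction r)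
  case 0
  show ?case by (rule exI[of _ "{0}"]) simp
next
  case (Suc r)
  then obtain K where K: "compact K" "\<forall>j. W j (S r) \<in> K" by blast
  have "compact {u + v | u v. u \<in> K \<and> v \<in> Cy}" by (rule compact_sums[OF K(1) Cy])
  moreover have "W j (S (Suc r)) \<in> {u + v | u v. u \<in> K \<and> v \<in> Cy}" for j
  proof -
    have eq: "S (Suc r) = S r + W r (S 1)" using S_add[of r 1] by simp
    have "W j (S (Suc r)) = W j (S r) + W (j + r) (S 1)"
      by (simp only: eq W_plus W_add)
    then have "W j (S (Suc r)) = W j (S r) + W (j + r) (W 1 x - x)"
      by (simp only: S_def)
    then show ?thesis using K(2) yorb by blast
  qed
  ultimately show ?case by blast
qed

lemma orbit_H: "H \<subseteq> range S \<Longrightarrow> \<forall>z\<in>H. \<exists>K. compact K \<and> (\<forall>n. W n z \<in> K)"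
  using S_orbit by blast

lemma WP_mult:
  assumes p: "p \<in> P H \<delta>'" and z: "z \<in> H" and d0: "0 \<le> \<delta>'"
  shows "norm (W (k*p) z - z) \<le> real k * M * \<delta>'"
proof (induction k)
  case 0 then show ?case by simp
next
  case (Suc k)
  have "W (Suc k * p) z - z = W (k*p) (W p z - z) + (W (k*p) z - z)"
    by (simp add: W_add[symmetric] W_diff add.commute)
  also have "norm \<dots> \<le> norm (W (k*p) (W p z - z)) + norm (W (k*p) z - z)" by (rule norm_triangle_ineq)
  also have "\<dots> \<le> M * \<delta>' + real k * M * \<delta>'"
  proof (rule add_mono[OF _ Suc])
    have "norm (W (k*p) (W p z - z)) \<le> M * norm (W p z - z)" by (rule W_norm)
    also have "\<dots> \<le> M * \<delta>'" using p z M1 unfolding P_def by (intro mult_left_mono) auto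
    finally show "norm (W (k*p) (W p z - z)) \<le> M * \<delta>'" .
  qed
  finally show ?case by (simp add: algebra_simps)
qed

lemma key:
  assumes eta: "\<eta> > 0"
    and nocover: "\<not> (\<exists>k. finite k \<and> range (\<lambda>n. W n x) \<subseteq> (\<Union>c\<in>k. ball c \<eta>))"
    and H: "finite H" "H \<subseteq> range S" and dpos: "\<delta> > 0"
  shows "\<exists>d m. d \<in> P H \<delta> \<and> m \<in> P H \<delta> \<and> \<eta>/4 \<le> norm (W d (S m) - S m)"
proof (rule ccontr)
  define \<epsilon> where "\<epsilon> = \<eta>/4"
  have epos: "\<epsilon> > 0" using eta by (simp add: \<epsilon>_def)
  assume "\<not> ?thesis"
  then have A0: "\<And>d m. d \<in> P H \<delta> \<Longrightarrow> m \<in> P H \<delta> \<Longrightarrow> \<not> \<eta>/4 \<le> norm (W d (S m) - S m)"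
    by blast
  have A: "\<And>d m. d \<in> P H \<delta> \<Longrightarrow> m \<in> P H \<delta> \<Longrightarrow> norm (W d (S m) - S m) < \<epsilon>"
    unfolding \<epsilon>_def using A0 by (simp add: not_le)
  define B where "B = (M+1) * norm x"
  obtain K :: nat where K: "B / \<epsilon> < real K" using reals_Archimedean2 by blast
  have B0: "0 \<le> B" unfolding B_def using M1 by simp
  have Kpos: "0 < real K" using K B0 epos by (meson divide_nonneg_pos le_less_trans)
  have BK: "B / real K \<le> \<epsilon>" using K Kpos epos by (simp add: field_simps)
  define \<delta>' where "\<delta>' = \<delta> / (real K * M)"
  have KM: "0 < real K * M" using Kpos M1 by simp
  have d'pos: "\<delta>' > 0" unfolding \<delta>'_def using dpos KM by simp
  have d'le: "\<delta>' \<le> \<delta>"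
  proof -
    have "K \<ge> 1" using Kpos by simp
    then have "1 \<le> real K" by simp
    then have "1 * 1 \<le> real K * M" using M1 by (intro mult_mono) auto
    then have "1 \<le> real K * M" by simp
    then show ?thesis unfolding \<delta>'_def using dpos by (simp add: divide_le_eq_1 field_simps)
  qed
  have Pmono: "P H \<delta>' \<subseteq> P H \<delta>" unfolding P_def using d'le by force
  have multP: "k * p \<in> P H \<delta>" if p: "p \<in> P H \<delta>'" and k: "k \<le> K" for p k
    unfolding P_def
  proof (intro CollectI ballI)
    fix z assume z: "z \<in> H"
    have "norm (W (k*p) z - z) \<le> real k * M * \<delta>'" by (rule WP_mult[OF p z]) (use d'pos in simp)
    also have "\<dots> \<le> real K * M * \<delta>'" using k M1 d'pos by (intro mult_right_mono) auto
    also have "\<dots> = \<delta>" unfolding \<delta>'_def using Kpos M1 by (simp add: field_simps)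
    finally show "norm (W (k*p) z - z) \<le> \<delta>" .
  qed
  have Sp: "norm (S p) \<le> 2 * \<epsilon>" if p: "p \<in> P H \<delta>'" for p
  proof -
    have lin: "k \<le> K \<Longrightarrow> norm (S (k*p) - real k *\<^sub>R S p) \<le> real k * \<epsilon>" for k
    proof (induction k)
      case 0 then show ?case by simp
    next
      case (Suc k)
      then have kK: "k \<le> K" by simp
      have "S (Suc k * p) = S p + S (k*p) + (W p (S (k*p)) - S (k*p))"
        using S_add[of p "k*p"] by simp
      then have "S (Suc k * p) - real (Suc k) *\<^sub>R S p = (S (k*p) - real k *\<^sub>R S p) + (W p (S (k*p)) - S (k*p))"
        by (simp add: algebra_simps)
      also have "norm \<dots> \<le> norm (S (k*p) - real k *\<^sub>R S p) + norm (W p (S (k*p)) - S (k*p))"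
        by (rule norm_triangle_ineq)
      also have "\<dots> \<le> real k * \<epsilon> + \<epsilon>"
        using Suc.IH[OF kK] A[OF _ multP[OF p kK]] Pmono p by (intro add_mono) force+
      finally show ?case by (simp add: algebra_simps)
    qed
    have "real K * norm (S p) = norm (real K *\<^sub>R S p)" by simp
    also have "\<dots> \<le> norm (S (K*p)) + norm (S (K*p) - real K *\<^sub>R S p)" using norm_triangle_sub[of "real K *\<^sub>R S p" "S (K*p)"] by (simp add: norm_minus_commute)
    also have "\<dots> \<le> B + real K * \<epsilon>" using lin[of K] S_bound[of "K*p"] unfolding B_def by (intro add_mono) auto
    finally have "real K * norm (S p) \<le> B + real K * \<epsilon>" .
    then have "norm (S p) \<le> (B + real K * \<epsilon>) / real K" using Kpos by (simp add: pos_le_divide_eq mult.commute)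
    also have "\<dots> = B / real K + \<epsilon>" using Kpos by (simp add: add_divide_distrib)
    finally have "norm (S p) \<le> B / real K + \<epsilon>" .
    then show ?thesis using BK by simp
  qed
  obtain L where L: "\<And>n. \<exists>p. p \<le> n \<and> n \<le> p + L \<and> p \<in> P H \<delta>'"
    using rel_dense[OF H(1) orbit_H[OF H(2)] d'pos] by blast
  have "\<forall>r. \<exists>K. compact K \<and> (\<forall>j. W j (S r) \<in> K)" using S_orbit by blast
  from choice[OF this] obtain Kf where Kf0: "\<forall>r. compact (Kf r) \<and> (\<forall>j. W j (S r) \<in> Kf r)" by blast
  then have Kf: "\<And>r. compact (Kf r)" "\<And>r j. W j (S r) \<in> Kf r" by auto
  define X where "X = (\<lambda>q. x + q) ` (\<Union>r\<in>{..L}. Kf r)"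
  have cU: "compact (\<Union>r\<in>{..L}. Kf r)" by (rule compact_UN) (auto simp: Kf(1))
  have "compact X" unfolding X_def
    by (rule compact_continuous_image[OF _ cU]) (intro continuous_intros)
  then have "\<exists>k. finite k \<and> X \<subseteq> (\<Union>c\<in>k. ball c \<epsilon>)"
    using epos unfolding compact_eq_totally_bounded by simp
  then obtain k where k: "finite k" "X \<subseteq> (\<Union>c\<in>k. ball c \<epsilon>)" by blast
  have "range (\<lambda>n. W n x) \<subseteq> (\<Union>c\<in>k. ball c \<eta>)"
  proof
    fix v assume "v \<in> range (\<lambda>n. W n x)"
    then obtain n where v: "v = W n x" by (rule rangeE)
    obtain p where p: "p \<le> n" "n \<le> p + L" "p \<in> P H \<delta>'" using L by blast
    define r where "r = n - p"
    have rL: "r \<le> L" "n = p + r" using p unfolding r_def by auto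
    have "W p (S r) \<in> (\<Union>r\<in>{..L}. Kf r)" using rL(1) Kf(2)[of p r] by auto
    then have "x + W p (S r) \<in> X" unfolding X_def by (rule imageI)
    then have "x + W p (S r) \<in> (\<Union>c\<in>k. ball c \<epsilon>)" using k(2) by blast
    then obtain c where c: "c \<in> k" "dist c (x + W p (S r)) < \<epsilon>" by auto
    have "v = (x + W p (S r)) + S p" using S_add[of p r] rL(2) v unfolding S_def by simp
    then have cv: "c - v = (c - (x + W p (S r))) - S p" by simp
    have "dist c v \<le> dist c (x + W p (S r)) + norm (S p)"
      unfolding dist_norm cv by (rule norm_triangle_ineq4)
    also have "\<dots> < \<epsilon> + 2 * \<epsilon>" using c(2) Sp[OF p(3)] by simp
    also have "\<dots> < \<eta>" unfolding \<epsilon>_def using eta by simp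
    finally have "dist c v < \<eta>" .
    then show "v \<in> (\<Union>c\<in>k. ball c \<eta>)" using c(1) by auto
  qed
  then have "\<exists>k. finite k \<and> range (\<lambda>n. W n x) \<subseteq> (\<Union>c\<in>k. ball c \<eta>)" using k(1) by blast
  then show False using nocover by simp
qed

end


lemma geom_half: "(\<Sum>j<n. (1/2::real)^j) \<le> 2"
proof -
  have "(\<Sum>j<n. (1/2::real)^j) = 2 - 2 * (1/2)^n" by (induction n) (simp_all add: algebra_simps)
  then show ?thesis by simp
qed

context orb begin

definition Hs :: "nat \<Rightarrow> (nat \<Rightarrow> nat) \<Rightarrow> (nat \<Rightarrow> nat) \<Rightarrow> 'a set" where
  "Hs k d m = (\<lambda>i. S (m i)) ` {..<k} \<union> (\<lambda>i. S (d i)) ` {..<k} \<union> (\<lambda>A. S (sum m A)) ` Pow {..<k}"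

lemma Hs_fin: "finite (Hs k d m)" unfolding Hs_def by simp
lemma Hs_range: "Hs k d m \<subseteq> range S" unfolding Hs_def by auto

lemma Hs_cong:
  assumes "\<And>i. i < k \<Longrightarrow> d' i = d i \<and> m' i = m i"
  shows "Hs k d' m' = Hs k d m"
proof -
  have 1: "(\<lambda>i. S (m' i)) ` {..<k} = (\<lambda>i. S (m i)) ` {..<k}" using assms by (intro image_cong) auto
  have 2: "(\<lambda>i. S (d' i)) ` {..<k} = (\<lambda>i. S (d i)) ` {..<k}" using assms by (intro image_cong) auto
  have 3: "(\<lambda>A. S (sum m' A)) ` Pow {..<k} = (\<lambda>A. S (sum m A)) ` Pow {..<k}"
  proof (intro image_cong refl)
    fix A assume "A \<in> Pow {..<k}"
    then have "sum m' A = sum m A" using assms by (intro sum.cong) auto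
    then show "S (sum m' A) = S (sum m A)" by simp
  qed
  show ?thesis unfolding Hs_def 1 2 3 ..
qed

definition dl :: "real \<Rightarrow> nat \<Rightarrow> real" where "dl \<epsilon> k = \<epsilon> / 8 / 2^k"

definition cond :: "real \<Rightarrow> nat \<Rightarrow> (nat \<Rightarrow> nat) \<Rightarrow> (nat \<Rightarrow> nat) \<Rightarrow> bool" where
  "cond \<epsilon> k d m \<longleftrightarrow> d k \<in> P (Hs k d m) (dl \<epsilon> k) \<and> m k \<in> P (Hs k d m) (dl \<epsilon> k)
      \<and> \<epsilon> \<le> norm (W (d k) (S (m k)) - S (m k))"

lemma cond_cong:
  assumes "\<And>i. i \<le> k \<Longrightarrow> d' i = d i \<and> m' i = m i"
  shows "cond \<epsilon> k d' m' = cond \<epsilon> k d m"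
proof -
  have "Hs k d' m' = Hs k d m" using assms by (intro Hs_cong) auto
  moreover have "d' k = d k" "m' k = m k" using assms by auto
  ultimately show ?thesis unfolding cond_def by simp
qed

lemma construct:
  assumes eta: "\<eta> > 0"
    and nocover: "\<not> (\<exists>k. finite k \<and> range (\<lambda>n. W n x) \<subseteq> (\<Union>c\<in>k. ball c \<eta>))"
  shows "\<exists>d m. \<forall>k. cond (\<eta>/4) k d m"
proof -
  define \<epsilon> where "\<epsilon> = \<eta>/4"
  have dlpos: "dl \<epsilon> k > 0" for k unfolding dl_def \<epsilon>_def using eta by simp
  define Pst where "Pst n s \<longleftrightarrow> (\<forall>k<n. cond \<epsilon> k (fst s) (snd s))" for n and s :: "(nat \<Rightarrow> nat) \<times> (nat \<Rightarrow> nat)"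
  define Q where "Q n s s' \<longleftrightarrow> (\<forall>i<n. fst s' i = fst s i \<and> snd s' i = snd s i)" for n and s s' :: "(nat \<Rightarrow> nat) \<times> (nat \<Rightarrow> nat)"
  have step: "\<exists>s'. Pst (Suc n) s' \<and> Q n s s'" if "Pst n s" for n s
  proof -
    obtain d m where s: "s = (d, m)" by (cases s)
    obtain dn mn where dm: "dn \<in> P (Hs n d m) (dl \<epsilon> n)" "mn \<in> P (Hs n d m) (dl \<epsilon> n)"
        "\<eta>/4 \<le> norm (W dn (S mn) - S mn)"
      using key[OF eta nocover Hs_fin Hs_range dlpos] by blast
    define d' where "d' = d(n := dn)"
    define m' where "m' = m(n := mn)"
    have "cond \<epsilon> k d' m'" if k: "k < Suc n" for k
    proof (cases "k = n")
      case True
      have "Hs n d' m' = Hs n d m" unfolding d'_def m'_def by (intro Hs_cong) auto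
      then show ?thesis unfolding cond_def True using dm unfolding d'_def m'_def \<epsilon>_def by simp
    next
      case False
      then have "k < n" using k by simp
      then have "cond \<epsilon> k d m" using that \<open>Pst n s\<close> unfolding Pst_def s by simp
      moreover have "cond \<epsilon> k d' m' = cond \<epsilon> k d m"
        using \<open>k < n\<close> unfolding d'_def m'_def by (intro cond_cong) auto
      ultimately show ?thesis by simp
    qed
    then have "Pst (Suc n) (d', m')" unfolding Pst_def by simp
    moreover have "Q n s (d', m')" unfolding Q_def s d'_def m'_def by simp
    ultimately show ?thesis by blast
  qed
  have "\<exists>s. Pst 0 s" unfolding Pst_def by simp
  from dependent_nat_choice[of Pst Q, OF this step]
  obtain f where f: "\<And>n. Pst n (f n)" "\<And>n. Q n (f n) (f (Suc n))" by blast
  define d where "d k = fst (f (Suc k)) k" for k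
  define m where "m k = snd (f (Suc k)) k" for k
  have agree: "\<forall>k<n. fst (f n) k = d k \<and> snd (f n) k = m k" for n
  proof (induction n)
    case 0 then show ?case by simp
  next
    case (Suc n)
    show ?case
    proof (intro allI impI)
      fix k assume "k < Suc n"
      show "fst (f (Suc n)) k = d k \<and> snd (f (Suc n)) k = m k"
      proof (cases "k = n")
        case True then show ?thesis unfolding d_def m_def by simp
      next
        case False
        then have "k < n" using \<open>k < Suc n\<close> by simp
        then show ?thesis using Suc.IH f(2)[of n] unfolding Q_def by simp
      qed
    qed
  qed
  have "cond \<epsilon> k d m" for k
  proof -
    have "cond \<epsilon> k (fst (f (Suc k))) (snd (f (Suc k)))" using f(1)[of "Suc k"] unfolding Pst_def by simp
    moreover have "cond \<epsilon> k (fst (f (Suc k))) (snd (f (Suc k))) = cond \<epsilon> k d m"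
      using agree[of "Suc k"] by (intro cond_cong) auto
    ultimately show ?thesis by simp
  qed
  then show ?thesis unfolding \<epsilon>_def by blast
qed

end


lemma conv_bound:
  fixes u :: "nat \<Rightarrow> 'a::real_normed_vector"
  assumes "\<And>A. A \<subseteq> {..<n} \<Longrightarrow> norm (c + (\<Sum>j\<in>A. u j)) \<le> R"
    and "\<And>j. j < n \<Longrightarrow> 0 \<le> t j \<and> t j \<le> 1"
  shows "norm (c + (\<Sum>j<n. t j *\<^sub>R u j)) \<le> R"
  using assms
proof (induction n arbitrary: c)
  case 0
  then show ?case using "0.prems"(1)[of "{}"] by simp
next
  case (Suc n)
  define X where "X = c + (\<Sum>j<n. t j *\<^sub>R u j)"
  have t: "0 \<le> t n" "t n \<le> 1" using Suc.prems(2)[of n] by auto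
  have h1: "norm X \<le> R" unfolding X_def
  proof (rule Suc.IH)
    fix A assume A: "A \<subseteq> {..<n}"
    have "A \<subseteq> {..<Suc n}" using A by auto
    then show "norm (c + (\<Sum>j\<in>A. u j)) \<le> R" by (rule Suc.prems(1))
  next
    fix j assume "j < n" then show "0 \<le> t j \<and> t j \<le> 1" using Suc.prems(2) by auto
  qed
  have h2: "norm (X + u n) \<le> R"
  proof -
    have "norm ((c + u n) + (\<Sum>j<n. t j *\<^sub>R u j)) \<le> R"
    proof (rule Suc.IH)
      fix A assume A: "A \<subseteq> {..<n}"
      then have "n \<notin> A" "finite A" by (auto intro: finite_subset)
      then have "c + u n + (\<Sum>j\<in>A. u j) = c + (\<Sum>j\<in>insert n A. u j)" by (simp add: algebra_simps)
      moreover have "insert n A \<subseteq> {..<Suc n}" using A by auto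
      ultimately show "norm (c + u n + (\<Sum>j\<in>A. u j)) \<le> R" using Suc.prems(1) by metis
    next
      fix j assume "j < n" then show "0 \<le> t j \<and> t j \<le> 1" using Suc.prems(2) by auto
    qed
    then show ?thesis unfolding X_def by (simp add: algebra_simps)
  qed
  have "c + (\<Sum>j<Suc n. t j *\<^sub>R u j) = (1 - t n) *\<^sub>R X + t n *\<^sub>R (X + u n)"
    unfolding X_def by (simp add: algebra_simps)
  also have "norm \<dots> \<le> norm ((1 - t n) *\<^sub>R X) + norm (t n *\<^sub>R (X + u n))" by (rule norm_triangle_ineq)
  also have "\<dots> = (1 - t n) * norm X + t n * norm (X + u n)" using t by simp
  also have "\<dots> \<le> (1 - t n) * R + t n * R" using t h1 h2 by (intro add_mono mult_left_mono) auto
  also have "\<dots> = R" by (simp add: algebra_simps)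
  finally show ?case .
qed

context orb begin

lemma dl_sum: "(\<Sum>j<n. dl \<epsilon> j) = \<epsilon>/8 * (\<Sum>j<n. (1/2)^j)"
  unfolding dl_def by (simp add: sum_distrib_left power_one_over field_simps)

lemma dl_sum_le: "\<epsilon> \<ge> 0 \<Longrightarrow> (\<Sum>j<n. dl \<epsilon> j) \<le> \<epsilon>/4"
proof -
  assume e: "\<epsilon> \<ge> 0"
  have "\<epsilon>/8 * (\<Sum>j<n. (1/2::real)^j) \<le> \<epsilon>/8 * 2" using geom_half e by (intro mult_left_mono) auto
  then show ?thesis unfolding dl_sum by simp
qed

lemma dl_k: "\<epsilon> \<ge> 0 \<Longrightarrow> real k * dl \<epsilon> k \<le> \<epsilon>/8"
proof -
  assume e: "\<epsilon> \<ge> 0"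
  have "k < 2^k" by (rule less_exp)
  then have "real k \<le> 2^k" by (metis less_imp_le of_nat_le_iff of_nat_numeral of_nat_power)
  then have "real k * (\<epsilon>/8) \<le> 2^k * (\<epsilon>/8)" using e by (intro mult_right_mono) auto
  then show ?thesis unfolding dl_def by (simp add: field_simps)
qed

lemma dl_nonneg: "\<epsilon> \<ge> 0 \<Longrightarrow> dl \<epsilon> k \<ge> 0" unfolding dl_def by simp

end

context orb begin

lemma seq_bounds:
  assumes epos: "\<epsilon> > 0" and C: "\<And>k. cond \<epsilon> k d m"
  defines "C0 \<equiv> (M+1) * norm x + \<epsilon>/4"
  shows "\<And>t n b. (\<And>j. j < n \<Longrightarrow> \<bar>t j\<bar> \<le> b) \<Longrightarrow> 0 \<le> b \<Longrightarrow> norm (\<Sum>j<n. t j *\<^sub>R S (m j)) \<le> 2 * C0 * b"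
    and "\<And>t n k. k < n \<Longrightarrow> (\<And>j. j < n \<Longrightarrow> \<bar>t j\<bar> \<le> \<bar>t k\<bar>) \<Longrightarrow>
           \<bar>t k\<bar> * (\<epsilon>/2) \<le> (M+1) * norm (\<Sum>j<n. t j *\<^sub>R S (m j))"
proof -
  define u where "u j = S (m j)" for j
  have e0: "\<epsilon> \<ge> 0" using epos by simp
  have FA: "\<epsilon> \<le> norm (W (d k) (u k) - u k)" for k using C[of k] unfolding cond_def u_def by simp
  have FC: "norm (W (m k) (S (d i)) - S (d i)) \<le> dl \<epsilon> k" if "i < k" for i k
  proof -
    have "S (d i) \<in> Hs k d m" unfolding Hs_def using that by auto
    then show ?thesis using C[of k] unfolding cond_def P_def by blast
  qed
  have FB: "norm (W (d k) (S (m i)) - S (m i)) \<le> dl \<epsilon> k" if "i < k" for i k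
  proof -
    have "S (m i) \<in> Hs k d m" unfolding Hs_def using that by auto
    then show ?thesis using C[of k] unfolding cond_def P_def by blast
  qed
  have FD: "norm (W (m k) (S (sum m A)) - S (sum m A)) \<le> dl \<epsilon> k" if "A \<subseteq> {..<k}" for A k
  proof -
    have "S (sum m A) \<in> Hs k d m" unfolding Hs_def using that by auto
    then show ?thesis using C[of k] unfolding cond_def P_def by blast
  qed
  have up1: "A \<subseteq> {..<n} \<Longrightarrow> norm ((\<Sum>j\<in>A. u j) - S (sum m A)) \<le> (\<Sum>j\<in>A. dl \<epsilon> j)" for A n
  proof (induction n arbitrary: A)
    case 0 then show ?case by simp
  next
    case (Suc n)
    show ?case
    proof (cases "n \<in> A")
      case False
      then have "A \<subseteq> {..<n}" using Suc.prems by (auto simp: less_Suc_eq)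
      then show ?thesis by (rule Suc.IH)
    next
      case True
      define A' where "A' = A - {n}"
      have A': "A' \<subseteq> {..<n}" "A = insert n A'" "n \<notin> A'" "finite A'"
        using Suc.prems True unfolding A'_def by (auto simp: less_Suc_eq intro: finite_subset)
      define s where "s = sum m A'"
      have sA: "sum m A = m n + s" unfolding s_def using A' by simp
      have uA: "(\<Sum>j\<in>A. u j) = u n + (\<Sum>j\<in>A'. u j)" using A' by simp
      have dA: "(\<Sum>j\<in>A. dl \<epsilon> j) = dl \<epsilon> n + (\<Sum>j\<in>A'. dl \<epsilon> j)" using A' by simp
      have "S (m n + s) = u n + S s + (W (m n) (S s) - S s)" using S_add[of "m n" s] unfolding u_def by simp
      then have "(\<Sum>j\<in>A. u j) - S (sum m A) = ((\<Sum>j\<in>A'. u j) - S s) - (W (m n) (S s) - S s)"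
        unfolding uA sA by (simp add: algebra_simps)
      also have "norm \<dots> \<le> norm ((\<Sum>j\<in>A'. u j) - S s) + norm (W (m n) (S s) - S s)" by (rule norm_triangle_ineq4)
      also have "\<dots> \<le> (\<Sum>j\<in>A'. dl \<epsilon> j) + dl \<epsilon> n"
        using Suc.IH[OF A'(1)] FD[OF A'(1)] unfolding s_def by (intro add_mono) auto
      finally show ?thesis unfolding dA by simp
    qed
  qed
  have up2: "norm (\<Sum>j\<in>A. u j) \<le> C0" if A: "A \<subseteq> {..<n}" for A n
  proof -
    have fA: "finite A" using A by (rule finite_subset) simp
    have "norm (\<Sum>j\<in>A. u j) \<le> norm ((\<Sum>j\<in>A. u j) - S (sum m A)) + norm (S (sum m A))"
      using norm_triangle_sub[of "\<Sum>j\<in>A. u j" "S (sum m A)"] by (simp add: add.commute)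
    also have "\<dots> \<le> (\<Sum>j\<in>A. dl \<epsilon> j) + (M+1) * norm x" using up1[OF A] S_bound by (intro add_mono) auto
    also have "(\<Sum>j\<in>A. dl \<epsilon> j) \<le> (\<Sum>j<n. dl \<epsilon> j)" using A dl_nonneg[OF e0] by (intro sum_mono2) auto
    also have "\<dots> \<le> \<epsilon>/4" by (rule dl_sum_le[OF e0])
    finally show ?thesis unfolding C0_def by simp
  qed
  show "norm (\<Sum>j<n. t j *\<^sub>R S (m j)) \<le> 2 * C0 * b" if tb: "\<And>j. j < n \<Longrightarrow> \<bar>t j\<bar> \<le> b" and b0: "0 \<le> b" for t n b
  proof (cases "b = 0")
    case True
    then have "\<And>j. j < n \<Longrightarrow> t j = 0" using tb by fastforce
    then show ?thesis using True by simp
  next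
    case False
    then have bpos: "b > 0" using b0 by simp
    define tp where "tp j = max (t j / b) 0" for j
    define tn where "tn j = max (- t j / b) 0" for j
    have teq: "t j = b * (tp j - tn j)" for j unfolding tp_def tn_def using bpos by (auto simp: max_def field_simps)
    have tp01: "0 \<le> tp j \<and> tp j \<le> 1" if "j < n" for j
      using tb[OF that] bpos unfolding tp_def by (auto simp: max_def field_simps abs_le_iff)
    have tn01: "0 \<le> tn j \<and> tn j \<le> 1" if "j < n" for j
      using tb[OF that] bpos unfolding tn_def by (auto simp: max_def field_simps abs_le_iff)
    have hyp: "norm (0 + (\<Sum>j\<in>A. u j)) \<le> C0" if "A \<subseteq> {..<n}" for A using up2[OF that] by simp
    have p1: "norm (\<Sum>j<n. tp j *\<^sub>R u j) \<le> C0" using conv_bound[of n 0 u C0 tp, OF hyp tp01] by simp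
    have p2: "norm (\<Sum>j<n. tn j *\<^sub>R u j) \<le> C0" using conv_bound[of n 0 u C0 tn, OF hyp tn01] by simp
    have "(\<Sum>j<n. t j *\<^sub>R S (m j)) = b *\<^sub>R ((\<Sum>j<n. tp j *\<^sub>R u j) - (\<Sum>j<n. tn j *\<^sub>R u j))"
      unfolding teq u_def by (simp add: scaleR_sum_right sum_subtractf[symmetric] algebra_simps)
    also have "norm \<dots> \<le> b * (C0 + C0)"
      using bpos norm_triangle_ineq4[of "(\<Sum>j<n. tp j *\<^sub>R u j)" "(\<Sum>j<n. tn j *\<^sub>R u j)"] p1 p2
      by (simp add: mult_left_mono)
    finally show ?thesis by (simp add: algebra_simps)
  qed
  show "\<bar>t k\<bar> * (\<epsilon>/2) \<le> (M+1) * norm (\<Sum>j<n. t j *\<^sub>R S (m j))"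
    if kn: "k < n" and tk: "\<And>j. j < n \<Longrightarrow> \<bar>t j\<bar> \<le> \<bar>t k\<bar>" for t n k
  proof -
    define v where "v = (\<Sum>j<n. t j *\<^sub>R u j)"
    define e where "e j = W (d k) (u j) - u j" for j
    have Wv: "W (d k) v - v = (\<Sum>j<n. t j *\<^sub>R e j)"
      unfolding v_def e_def by (simp add: W_sum W_scale scaleR_diff_right sum_subtractf)
    have split: "{..<n} = {..<k} \<union> insert k {Suc k..<n}" using kn by auto
    have "(\<Sum>j<n. t j *\<^sub>R e j) = (\<Sum>j<k. t j *\<^sub>R e j) + (t k *\<^sub>R e k + (\<Sum>j\<in>{Suc k..<n}. t j *\<^sub>R e j))"
      unfolding split by (subst sum.union_disjoint) auto
    moreover have n1: "norm (\<Sum>j<k. t j *\<^sub>R e j) \<le> \<bar>t k\<bar> * (\<epsilon>/8)"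
    proof -
      have "norm (\<Sum>j<k. t j *\<^sub>R e j) \<le> (\<Sum>j<k. norm (t j *\<^sub>R e j))" by (rule norm_sum)
      also have "\<dots> \<le> (\<Sum>j<k. \<bar>t k\<bar> * dl \<epsilon> k)"
      proof (rule sum_mono)
        fix j assume "j \<in> {..<k}"
        then have j: "j < k" by simp
        have "norm (e j) \<le> dl \<epsilon> k" using FB[OF j] unfolding e_def u_def .
        then show "norm (t j *\<^sub>R e j) \<le> \<bar>t k\<bar> * dl \<epsilon> k"
          using tk[of j] j kn by (simp add: mult_mono)
      qed
      also have "\<dots> = \<bar>t k\<bar> * (real k * dl \<epsilon> k)" by simp
      also have "\<dots> \<le> \<bar>t k\<bar> * (\<epsilon>/8)" using dl_k[OF e0] by (intro mult_left_mono) auto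
      finally show ?thesis .
    qed
    moreover have n2: "norm (\<Sum>j\<in>{Suc k..<n}. t j *\<^sub>R e j) \<le> \<bar>t k\<bar> * (\<epsilon>/4)"
    proof -
      have "norm (\<Sum>j\<in>{Suc k..<n}. t j *\<^sub>R e j) \<le> (\<Sum>j\<in>{Suc k..<n}. norm (t j *\<^sub>R e j))" by (rule norm_sum)
      also have "\<dots> \<le> (\<Sum>j\<in>{Suc k..<n}. \<bar>t k\<bar> * dl \<epsilon> j)"
      proof (rule sum_mono)
        fix j assume "j \<in> {Suc k..<n}"
        then have j: "k < j" "j < n" by auto
        have "e j = W (m j) (S (d k)) - S (d k)" unfolding e_def u_def by (rule S_swap)
        then have "norm (e j) \<le> dl \<epsilon> j" using FC[OF j(1)] by simp
        then show "norm (t j *\<^sub>R e j) \<le> \<bar>t k\<bar> * dl \<epsilon> j"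
          using tk[of j] j by (simp add: mult_mono)
      qed
      also have "\<dots> = \<bar>t k\<bar> * (\<Sum>j\<in>{Suc k..<n}. dl \<epsilon> j)" by (simp add: sum_distrib_left)
      also have "(\<Sum>j\<in>{Suc k..<n}. dl \<epsilon> j) \<le> (\<Sum>j<n. dl \<epsilon> j)"
        using dl_nonneg[OF e0] by (intro sum_mono2) auto
      also have "\<dots> \<le> \<epsilon>/4" by (rule dl_sum_le[OF e0])
      finally show ?thesis by (simp add: mult_left_mono)
    qed
    moreover have n3: "norm (t k *\<^sub>R e k) \<ge> \<bar>t k\<bar> * \<epsilon>"
      using FA[of k] unfolding e_def by (simp add: mult_left_mono)
    ultimately have "\<bar>t k\<bar> * \<epsilon> - \<bar>t k\<bar> * (\<epsilon>/8) - \<bar>t k\<bar> * (\<epsilon>/4) \<le> norm (W (d k) v - v)"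
    proof -
      assume eq: "(\<Sum>j<n. t j *\<^sub>R e j) = (\<Sum>j<k. t j *\<^sub>R e j) + (t k *\<^sub>R e k + (\<Sum>j\<in>{Suc k..<n}. t j *\<^sub>R e j))"
      have "norm (t k *\<^sub>R e k) \<le> norm (W (d k) v - v) + norm (\<Sum>j<k. t j *\<^sub>R e j) + norm (\<Sum>j\<in>{Suc k..<n}. t j *\<^sub>R e j)"
      proof -
        have "t k *\<^sub>R e k = (W (d k) v - v) - (\<Sum>j<k. t j *\<^sub>R e j) - (\<Sum>j\<in>{Suc k..<n}. t j *\<^sub>R e j)"
          unfolding Wv eq by simp
        then have "norm (t k *\<^sub>R e k) \<le> norm ((W (d k) v - v) - (\<Sum>j<k. t j *\<^sub>R e j)) + norm (\<Sum>j\<in>{Suc k..<n}. t j *\<^sub>R e j)"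
          by (simp only: norm_triangle_ineq4)
        moreover have "norm ((W (d k) v - v) - (\<Sum>j<k. t j *\<^sub>R e j)) \<le> norm (W (d k) v - v) + norm (\<Sum>j<k. t j *\<^sub>R e j)"
          by (rule norm_triangle_ineq4)
        ultimately show ?thesis by linarith
      qed
      then show ?thesis using n1 n2 n3 by linarith
    qed
    moreover have "norm (W (d k) v - v) \<le> (M+1) * norm v"
    proof -
      have "norm (W (d k) v - v) \<le> norm (W (d k) v) + norm v" by (rule norm_triangle_ineq4)
      also have "\<dots> \<le> M * norm v + norm v" using W_norm by simp
      finally show ?thesis by (simp add: algebra_simps)
    qed
    moreover have "\<bar>t k\<bar> * (\<epsilon>/2) \<le> \<bar>t k\<bar> * \<epsilon> - \<bar>t k\<bar> * (\<epsilon>/8) - \<bar>t k\<bar> * (\<epsilon>/4)"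
      using e0 by (simp add: algebra_simps mult_left_mono)
    ultimately show ?thesis unfolding v_def u_def by linarith
  qed
qed

end


lemma c0_from_bounds:
  fixes u :: "nat \<Rightarrow> 'a::banach"
  assumes up: "\<And>t n b. (\<And>j. j < n \<Longrightarrow> \<bar>t j\<bar> \<le> b) \<Longrightarrow> 0 \<le> b \<Longrightarrow> norm (\<Sum>j<n. t j *\<^sub>R u j) \<le> Cu * b"
    and low: "\<And>t n k. k < n \<Longrightarrow> (\<And>j. j < n \<Longrightarrow> \<bar>t j\<bar> \<le> \<bar>t k\<bar>) \<Longrightarrow> \<bar>t k\<bar> * c \<le> norm (\<Sum>j<n. t j *\<^sub>R u j)"
    and cpos: "c > 0"
  shows "c0_embeds TYPE('a)"
proof -
  define PS where "PS f n = (\<Sum>j<n. f j *\<^sub>R u j)" for f :: "nat \<Rightarrow> real" and n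
  have Cu0: "0 \<le> Cu" using up[of 0 "\<lambda>_. 0" 1] by simp
  have diff: "PS f m - PS f n = (\<Sum>j<m. (if n \<le> j then f j else 0) *\<^sub>R u j)" if "n \<le> m" for f m n
  proof -
    have split: "{..<m} = {..<n} \<union> {n..<m}" using that by auto
    have d: "{..<n} \<inter> {n..<m} = {}" by auto
    have "(\<Sum>j<m. (if n \<le> j then f j else 0) *\<^sub>R u j) = (\<Sum>j<n. (if n \<le> j then f j else 0) *\<^sub>R u j) + (\<Sum>j\<in>{n..<m}. (if n \<le> j then f j else 0) *\<^sub>R u j)"
      unfolding split by (rule sum.union_disjoint) (use d in auto)
    also have "(\<Sum>j<n. (if n \<le> j then f j else 0) *\<^sub>R u j) = 0" by (intro sum.neutral) auto
    also have "(\<Sum>j\<in>{n..<m}. (if n \<le> j then f j else 0) *\<^sub>R u j) = (\<Sum>j\<in>{n..<m}. f j *\<^sub>R u j)" by (intro sum.cong) auto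
    moreover have "PS f m = PS f n + (\<Sum>j\<in>{n..<m}. f j *\<^sub>R u j)"
      unfolding PS_def split by (rule sum.union_disjoint) (use d in auto)
    ultimately show ?thesis by simp
  qed
  have cauchy: "Cauchy (PS f)" if f: "f \<longlonglongrightarrow> 0" for f
  proof (rule CauchyI)
    fix e :: real assume e: "0 < e"
    define r where "r = e / (Cu + 1)"
    have rpos: "r > 0" unfolding r_def using e Cu0 by simp
    obtain N where N: "\<forall>n\<ge>N. norm (f n - 0) < r" using LIMSEQ_D[OF f rpos] by blast
    have Cur: "Cu * r < e" unfolding r_def using e Cu0 by (simp add: field_simps)
    have le: "norm (PS f m - PS f n) < e" if "N \<le> n" "n \<le> m" for m n
    proof -
      have "norm (PS f m - PS f n) \<le> Cu * r" unfolding diff[OF that(2)]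
      proof (rule up)
        fix j show "\<bar>if n \<le> j then f j else 0\<bar> \<le> r"
        proof (cases "n \<le> j")
          case True
          then have "N \<le> j" using that(1) by simp
          then have "\<bar>f j\<bar> < r" using N by simp
          then show ?thesis using True by simp
        qed (use rpos in simp)
      next
        show "0 \<le> r" using rpos by simp
      qed
      then show ?thesis using Cur by simp
    qed
    show "\<exists>M. \<forall>m\<ge>M. \<forall>n\<ge>M. norm (PS f m - PS f n) < e"
    proof (intro exI allI impI)
      fix m n assume "N \<le> m" "N \<le> n"
      then show "norm (PS f m - PS f n) < e"
        using le[of n m] le[of m n] by (cases "n \<le> m") (auto simp: norm_minus_commute)
    qed
  qed
  define J where "J f = lim (PS f)" for f
  have tends: "PS f \<longlonglongrightarrow> J f" if "f \<longlonglongrightarrow> 0" for f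
    unfolding J_def using cauchy[OF that] by (simp add: Cauchy_convergent_iff convergent_LIMSEQ_iff[symmetric])
  have add: "J (\<lambda>n. f n + g n) = J f + J g" if "f \<longlonglongrightarrow> 0" "g \<longlonglongrightarrow> 0" for f g
  proof -
    have "PS (\<lambda>n. f n + g n) = (\<lambda>n. PS f n + PS g n)"
      unfolding PS_def by (simp add: scaleR_add_left sum.distrib)
    then have "PS (\<lambda>n. f n + g n) \<longlonglongrightarrow> J f + J g" using tendsto_add[OF tends[OF that(1)] tends[OF that(2)]] by simp
    then show ?thesis unfolding J_def by (rule limI)
  qed
  have scl: "J (\<lambda>n. r * f n) = r *\<^sub>R J f" if "f \<longlonglongrightarrow> 0" for f r
  proof -
    have "PS (\<lambda>n. r * f n) = (\<lambda>n. r *\<^sub>R PS f n)"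
      unfolding PS_def by (simp add: scaleR_sum_right)
    then have "PS (\<lambda>n. r * f n) \<longlonglongrightarrow> r *\<^sub>R J f" using tendsto_scaleR[OF tendsto_const tends[OF that]] by simp
    then show ?thesis unfolding J_def by (rule limI)
  qed
  have bnds: "c * (SUP n. \<bar>f n\<bar>) \<le> norm (J f) \<and> norm (J f) \<le> Cu * (SUP n. \<bar>f n\<bar>)" if f: "f \<longlonglongrightarrow> 0" for f
  proof -
    have "convergent f" using f by (rule convergentI)
    then have "Bseq f" by (rule convergent_imp_Bseq)
    then obtain K where K: "\<forall>n. norm (f n) \<le> K" by (rule BseqE) blast
    have bdd: "bdd_above (range (\<lambda>n. \<bar>f n\<bar>))" using K by (intro bdd_aboveI2[of _ _ K]) simp
    define sp where "sp = (SUP n. \<bar>f n\<bar>)"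
    have fsp: "\<bar>f j\<bar> \<le> sp" for j unfolding sp_def by (rule cSUP_upper[OF UNIV_I bdd])
    have sp0: "0 \<le> sp" using fsp[of 0] by simp
    have "norm (J f) \<le> Cu * sp"
    proof (rule LIMSEQ_le_const2[OF tendsto_norm[OF tends[OF f]]], intro exI allI impI)
      fix n show "norm (PS f n) \<le> Cu * sp" unfolding PS_def by (rule up) (use fsp sp0 in auto)
    qed
    moreover have "c * sp \<le> norm (J f)"
    proof -
      have "\<bar>f k\<bar> * c \<le> norm (J f)" for k
      proof (rule LIMSEQ_le_const[OF tendsto_norm[OF tends[OF f]]], rule exI[of _ "Suc k"], intro allI impI)
        fix n assume n: "Suc k \<le> n"
        have fin: "finite ((\<lambda>j. \<bar>f j\<bar>) ` {..<n})" "(\<lambda>j. \<bar>f j\<bar>) ` {..<n} \<noteq> {}" using n by (auto simp: lessThan_empty_iff)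
        have "Max ((\<lambda>j. \<bar>f j\<bar>) ` {..<n}) \<in> (\<lambda>j. \<bar>f j\<bar>) ` {..<n}" by (rule Max_in[OF fin])
        then obtain kk where kk: "kk < n" "\<bar>f kk\<bar> = Max ((\<lambda>j. \<bar>f j\<bar>) ` {..<n})" by auto
        have mx: "\<bar>f j\<bar> \<le> \<bar>f kk\<bar>" if "j < n" for j unfolding kk(2) using fin(1) that by (intro Max_ge) auto
        have "\<bar>f k\<bar> * c \<le> \<bar>f kk\<bar> * c" using mx[of k] n cpos by (intro mult_right_mono) auto
        also have "\<dots> \<le> norm (PS f n)" unfolding PS_def by (rule low[of kk n f, OF kk(1) mx])
        finally show "\<bar>f k\<bar> * c \<le> norm (PS f n)" .
      qed
      then have "\<bar>f k\<bar> \<le> norm (J f) / c" for k using cpos by (simp add: pos_le_divide_eq)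
      then have "sp \<le> norm (J f) / c" unfolding sp_def by (intro cSUP_least) auto
      then show ?thesis using cpos by (simp add: pos_le_divide_eq mult.commute)
    qed
    ultimately show ?thesis unfolding sp_def by simp
  qed
  show ?thesis unfolding c0_embeds_def
    by (rule exI[of _ J]) (use add scl bnds cpos in blast)
qed



theorem proposition2p9:
  fixes T :: "real \<Rightarrow> ('a::banach \<Rightarrow>\<^sub>L 'a)" and x :: 'a and a :: real
  assumes "\<not> c0_embeds TYPE('a)"
    and "bounded_C0_group T"
    and "a > 0"
    and "asymptotically_almost_periodic T (blinfun_apply (T a - id_blinfun) x)"
  shows "asymptotically_almost_periodic T x"
proof -
  note nc0 = assms(1)
  have T0: "T 0 = id_blinfun" and Tadd: "\<And>s t. T (s + t) = T s o\<^sub>L T t"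
    and Tcont: "\<And>z. continuous_on UNIV (\<lambda>t. blinfun_apply (T t) z)"
    using assms(2) unfolding bounded_C0_group_def by auto
  obtain M0 where M0: "\<And>t. norm (T t) \<le> M0" using assms(2) unfolding bounded_C0_group_def by auto
  define M where "M = max M0 1"
  have Mb: "\<And>t. norm (T t) \<le> M" using M0 unfolding M_def by (meson max.cobounded1 order_trans)
  have M1: "1 \<le> M" unfolding M_def by simp
  interpret G: grp T a M using T0 Tadd Mb M1 assms(3) by unfold_locales auto
  define y where "y = blinfun_apply (T a - id_blinfun) x"
  define Cy where "Cy = closure {blinfun_apply (T t) y | t. t \<ge> 0}"
  have cCy: "compact Cy" using assms(4) unfolding asymptotically_almost_periodic_def Cy_def y_def .
  have y_eq: "y = G.W 1 x - x" unfolding y_def G.W_def by (simp add: blinfun.diff_left)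
  have yorb: "G.W j (G.W 1 x - x) \<in> Cy" for j
  proof -
    have "G.W j (G.W 1 x - x) = blinfun_apply (T (real j * a)) y" unfolding y_eq G.W_def ..
    moreover have "real j * a \<ge> 0" using assms(3) by simp
    ultimately have "G.W j (G.W 1 x - x) \<in> {blinfun_apply (T t) y | t. t \<ge> 0}" by blast
    then show ?thesis unfolding Cy_def by (rule subsetD[OF closure_subset])
  qed
  interpret O: orb T a M x Cy using cCy yorb by unfold_locales auto
  have TB: "\<exists>k. finite k \<and> range (\<lambda>n. G.W n x) \<subseteq> (\<Union>c\<in>k. ball c \<eta>)" if eta: "\<eta> > 0" for \<eta>
  proof (rule ccontr)
    assume nocover: "\<not> ?thesis"
    obtain d m where C: "\<And>k. O.cond (\<eta>/4) k d m" using O.construct[OF eta nocover] by blast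
    define \<epsilon> where "\<epsilon> = \<eta>/4"
    have epos: "\<epsilon> > 0" unfolding \<epsilon>_def using eta by simp
    note B = O.seq_bounds[OF epos C[unfolded \<epsilon>_def[symmetric]]]
    define c where "c = \<epsilon> / 2 / (M + 1)"
    have cpos: "c > 0" unfolding c_def using epos M1 by simp
    have low: "\<bar>t k\<bar> * c \<le> norm (\<Sum>j<n. t j *\<^sub>R O.S (m j))"
      if "k < n" "\<And>j. j < n \<Longrightarrow> \<bar>t j\<bar> \<le> \<bar>t k\<bar>" for t n k
    proof -
      have "\<bar>t k\<bar> * (\<epsilon>/2) \<le> (M+1) * norm (\<Sum>j<n. t j *\<^sub>R O.S (m j))" by (rule B(2)[of k n t, OF that])
      then show ?thesis unfolding c_def using M1 by (simp add: field_simps)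
    qed
    have "c0_embeds TYPE('a)"
      by (rule c0_from_bounds[where u = "\<lambda>j. O.S (m j)", OF B(1) low cpos]) auto
    then show False using nc0 by simp
  qed
  define Orb where "Orb = {blinfun_apply (T t) x | t. t \<ge> 0}"
  have cover: "\<exists>k. finite k \<and> Orb \<subseteq> (\<Union>c\<in>k. ball c (e/2))" if e: "e > 0" for e
  proof -
    have "e / (4*M) > 0" using e M1 by simp
    then obtain k where k: "finite k" "range (\<lambda>n. G.W n x) \<subseteq> (\<Union>c\<in>k. ball c (e/(4*M)))" using TB by blast
    define Z where "Z = (\<Union>c\<in>k. (\<lambda>s. blinfun_apply (T s) c) ` {0..a})"
    have "compact Z" unfolding Z_def
    proof (rule compact_UN[OF k(1)])
      fix c
      show "compact ((\<lambda>s. blinfun_apply (T s) c) ` {0..a})"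
        by (rule compact_continuous_image[OF continuous_on_subset[OF Tcont]]) auto
    qed
    moreover have "e/4 > 0" using e by simp
    ultimately have "\<exists>k2. finite k2 \<and> Z \<subseteq> (\<Union>c\<in>k2. ball c (e/4))" unfolding compact_eq_totally_bounded by simp
    then obtain k2 where k2: "finite k2" "Z \<subseteq> (\<Union>c\<in>k2. ball c (e/4))" by blast
    have "Orb \<subseteq> (\<Union>c\<in>k2. ball c (e/2))"
    proof
      fix v assume "v \<in> Orb"
      then obtain t where t: "t \<ge> 0" "v = blinfun_apply (T t) x" unfolding Orb_def by blast
      define n where "n = nat \<lfloor>t / a\<rfloor>"
      have fl0: "0 \<le> \<lfloor>t / a\<rfloor>" using t(1) assms(3) by simp
      have rn: "real n = of_int \<lfloor>t / a\<rfloor>" unfolding n_def using fl0 by simp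
      define s where "s = t - real n * a"
      have "of_int \<lfloor>t / a\<rfloor> \<le> t / a" by (rule of_int_floor_le)
      then have "of_int \<lfloor>t / a\<rfloor> * a \<le> t / a * a" using assms(3) by (intro mult_right_mono) auto
      then have "real n * a \<le> t" unfolding rn using assms(3) by simp
      then have s0: "0 \<le> s" unfolding s_def by simp
      have "t / a < of_int \<lfloor>t / a\<rfloor> + 1" by (rule real_of_int_floor_add_one_gt)
      then have "t / a * a < (of_int \<lfloor>t / a\<rfloor> + 1) * a" using assms(3) by (intro mult_strict_right_mono) auto
      then have "t < (real n + 1) * a" unfolding rn using assms(3) by simp
      then have sa: "s \<le> a" unfolding s_def by (simp add: algebra_simps)
      have veq: "v = blinfun_apply (T s) (G.W n x)"
        unfolding t(2) G.W_def G.Tapp_add[symmetric] s_def by simp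
      have "G.W n x \<in> (\<Union>c\<in>k. ball c (e/(4*M)))" by (rule subsetD[OF k(2) rangeI])
      then obtain c where c0: "c \<in> k" "G.W n x \<in> ball c (e/(4*M))" by (rule UN_E)
      have c: "c \<in> k" "dist c (G.W n x) < e/(4*M)" using c0 by auto
      have "blinfun_apply (T s) c \<in> (\<lambda>s. blinfun_apply (T s) c) ` {0..a}" using s0 sa by auto
      then have "blinfun_apply (T s) c \<in> Z" unfolding Z_def by (rule UN_I[OF c(1)])
      then have "blinfun_apply (T s) c \<in> (\<Union>c\<in>k2. ball c (e/4))" by (rule subsetD[OF k2(2)])
      then obtain c2 where c20: "c2 \<in> k2" "blinfun_apply (T s) c \<in> ball c2 (e/4)" by (rule UN_E)
      have c2: "c2 \<in> k2" "dist c2 (blinfun_apply (T s) c) < e/4" using c20 by auto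
      have "dist (blinfun_apply (T s) c) v = norm (blinfun_apply (T s) (c - G.W n x))"
        unfolding veq dist_norm by (simp add: blinfun.diff_right)
      also have "\<dots> \<le> M * norm (c - G.W n x)" by (rule G.T_norm)
      also have "\<dots> \<le> M * (e/(4*M))" using c(2) M1 by (intro mult_left_mono) (auto simp: dist_norm)
      also have "\<dots> = e/4" using M1 by simp
      finally have "dist c2 v < e/4 + e/4" using c2(2) dist_triangle[of c2 v "blinfun_apply (T s) c"] by linarith
      then show "v \<in> (\<Union>c\<in>k2. ball c (e/2))" using c2(1) by auto
    qed
    then show ?thesis using k2(1) by blast
  qed
  have "compact (closure Orb)"
    unfolding compact_eq_totally_bounded
  proof (intro conjI allI impI)
    show "complete (closure Orb)" by (simp add: complete_eq_closed)
    fix e :: real assume e: "e > 0"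
    obtain k where k: "finite k" "Orb \<subseteq> (\<Union>c\<in>k. ball c (e/2))" using cover[OF e] by blast
    have "closure Orb \<subseteq> (\<Union>c\<in>k. cball c (e/2))"
    proof (rule closure_minimal)
      have "(\<Union>c\<in>k. ball c (e/2)) \<subseteq> (\<Union>c\<in>k. cball c (e/2))" by (rule UN_mono[OF order_refl ball_subset_cball])
      then show "Orb \<subseteq> (\<Union>c\<in>k. cball c (e/2))" using k(2) by (rule order_trans[rotated])
      show "closed (\<Union>c\<in>k. cball c (e/2))" using k(1) by (intro closed_UN) auto
    qed
    also have "\<dots> \<subseteq> (\<Union>c\<in>k. ball c e)"
    proof (rule UN_mono[OF order_refl])
      fix c show "cball c (e/2) \<subseteq> ball c e"
      proof
        fix y assume "y \<in> cball c (e/2)"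
        then show "y \<in> ball c e" using e by simp
      qed
    qed
    finally have sub: "closure Orb \<subseteq> (\<Union>c\<in>k. ball c e)" .
    show "\<exists>k. finite k \<and> closure Orb \<subseteq> (\<Union>c\<in>k. ball c e)" by (rule exI[of _ k], rule conjI[OF k(1) sub])
  qed
  then show ?thesis unfolding asymptotically_almost_periodic_def Orb_def .
qed


end
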